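(* For $n\in\mathbb{Z}$, $0<q<1$ and $t>0$, \[\mathbb{P}(\chi+S\le n)=\frac{1}{(-tq^{\frac12+n};q)_\infty},\] where $\chi$ and $S$ are independent random variables with the laws below.
   Context: $(x;q)_\infty=\prod_{j\ge0}(1-xq^j)$, $(x;q)_n=(x;q)_\infty/(xq^n;q)_\infty$, $\theta(x)=(x;q)_\infty(q/x;q)_\infty$. $\chi$ is $\mathbb{Z}_{\ge0}$-valued with $\mathbb{P}(\chi=n)=\frac{q^n}{(q;q)_n}(q;q)_\infty$; $S$ is $\mathbb{Z}$-valued with $\mathbb{P}(S=\ell)=\frac{t^\ell q^{\ell^2/2}}{(q;q)_\infty\theta(-tq^{1/2})}$. *)

theory Defs
  imports "HOL-Probability.Probability"
begin

definition qpoch_inf :: "real \<Rightarrow> real \<Rightarrow> real" where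
  "qpoch_inf x q = (\<Prod>j. (1 - x * q ^ j))"

definition qpoch :: "real \<Rightarrow> real \<Rightarrow> nat \<Rightarrow> real" where
  "qpoch x q n = (\<Prod>j<n. (1 - x * q ^ j))"

definition qtheta :: "real \<Rightarrow> real \<Rightarrow> real" where
  "qtheta q x = qpoch_inf x q * qpoch_inf (q / x) q"

definition chi_pmf :: "real \<Rightarrow> nat pmf" where
  "chi_pmf q = embed_pmf (\<lambda>n. q ^ n / qpoch q q n * qpoch_inf q q)"

definition S_pmf :: "real \<Rightarrow> real \<Rightarrow> int pmf" where
  "S_pmf q t = embed_pmf (\<lambda>l. t powr (real_of_int l) * q powr (real_of_int l ^ 2 / 2)
                              / (qpoch_inf q q * qtheta q (- t * sqrt q)))"

definition chiS_pmf :: "real \<Rightarrow> real \<Rightarrow> int pmf" where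
  "chiS_pmf q t = map_pmf (\<lambda>(m, l). int m + l) (pair_pmf (chi_pmf q) (S_pmf q t))"

end

theory Submission
  imports Defs
begin

lemma qp_conv:
  fixes x q :: real
  assumes "0 < q" "q < 1"
  shows "convergent_prod (\<lambda>j. 1 - x * q ^ j)"
proof -
  have "summable (\<lambda>j. norm ((1 - x * q ^ j) - 1))"
    using assms by (simp add: abs_mult power_abs summable_geometric summable_mult)
  then show ?thesis
    by (intro abs_convergent_prod_imp_convergent_prod summable_imp_abs_convergent_prod)
qed

lemma qp_split:
  assumes "0 < q" "q < 1"
  shows "qpoch_inf x q = qpoch x q n * qpoch_inf (x * q ^ n) q"
proof -
  have "(\<lambda>j. 1 - x * q ^ j) has_prod ((\<Prod>k<n. 1 - x * q ^ k) * (\<Prod>k. 1 - x * q ^ (k + n)))"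
    by (rule has_prod_ignore_initial_segment'[OF qp_conv[OF assms]])
  then show ?thesis
    unfolding qpoch_inf_def qpoch_def
    by (simp add: has_prod_iff power_add mult.assoc mult.commute mult.left_commute)
qed

lemma qp_lim:
  assumes "0 < q" "q < 1"
  shows "(\<lambda>n. qpoch x q n) \<longlonglongrightarrow> qpoch_inf x q"
proof -
  have "(\<lambda>n. \<Prod>i\<le>n. 1 - x * q ^ i) \<longlonglongrightarrow> qpoch_inf x q"
    unfolding qpoch_inf_def by (rule convergent_prod_LIMSEQ[OF qp_conv[OF assms]])
  then have "(\<lambda>n. qpoch x q (Suc n)) \<longlonglongrightarrow> qpoch_inf x q"
    by (simp add: qpoch_def lessThan_Suc_atMost)
  then show ?thesis by (rule LIMSEQ_imp_Suc)
qed

lemma qpoch_Suc: "qpoch x q (Suc n) = qpoch x q n * (1 - x * q ^ n)"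
  by (simp add: qpoch_def)

lemma qpoch_ge1: assumes "x \<le> 0" "0 < q" shows "1 \<le> qpoch x q n"
proof (induction n)
  case 0 then show ?case by (simp add: qpoch_def)
next
  case (Suc n)
  have "x * q ^ n \<le> 0" using assms by (simp add: mult_nonpos_nonneg)
  then have "1 \<le> 1 - x * q ^ n" by simp
  have "1 * 1 \<le> qpoch x q n * (1 - x * q ^ n)"
    by (rule mult_mono) (use Suc \<open>1 \<le> 1 - x * q ^ n\<close> in auto)
  then show ?case by (simp add: qpoch_Suc)
qed

lemma qpoch_le_exp: assumes "x \<le> 0" "0 < q" "q < 1"
  shows "qpoch x q n \<le> exp (- x / (1 - q))"
proof -
  have "qpoch x q n \<le> (\<Prod>j<n. exp (- x * q ^ j))"
    unfolding qpoch_def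
  proof (rule prod_mono)
    fix j assume "j \<in> {..<n}"
    have "x * q ^ j \<le> 0" using assms by (simp add: mult_nonpos_nonneg)
    moreover have "1 + (- x * q ^ j) \<le> exp (- x * q ^ j)" by (rule exp_ge_add_one_self)
    ultimately show "0 \<le> 1 - x * q ^ j \<and> 1 - x * q ^ j \<le> exp (- x * q ^ j)" by simp
  qed
  also have "\<dots> = exp (- x * (\<Sum>j<n. q ^ j))"
    by (simp add: exp_sum sum_distrib_left)
  also have "\<dots> \<le> exp (- x / (1 - q))"
  proof -
    have "(\<Sum>j<n. q ^ j) \<le> 1 / (1 - q)"
      using assms by (simp add: sum_gp_strict divide_right_mono)
    then have "- x * (\<Sum>j<n. q ^ j) \<le> - x * (1 / (1 - q))"
      using assms by (intro mult_left_mono) auto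
    then show ?thesis by simp
  qed
  finally show ?thesis .
qed

lemma qp_ge1: assumes "x \<le> 0" "0 < q" "q < 1" shows "1 \<le> qpoch_inf x q"
  by (rule LIMSEQ_le_const[OF qp_lim[OF assms(2,3)]]) (use qpoch_ge1 assms in auto)

lemma qp_le_exp: assumes "x \<le> 0" "0 < q" "q < 1" shows "qpoch_inf x q \<le> exp (- x / (1 - q))"
  by (rule LIMSEQ_le_const2[OF qp_lim[OF assms(2,3)]]) (use qpoch_le_exp assms in auto)

lemma qp_ge: assumes "x \<le> 0" "0 < q" "q < 1" shows "1 - x \<le> qpoch_inf x q"
proof -
  have "qpoch_inf x q = (1 - x) * qpoch_inf (x * q) q"
    using qp_split[OF assms(2,3), of x 1] by (simp add: qpoch_def)
  moreover have "1 \<le> qpoch_inf (x * q) q"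
    using assms by (intro qp_ge1) (auto intro: mult_nonpos_nonneg)
  moreover have "0 \<le> 1 - x" using assms by simp
  ultimately show ?thesis
    using mult_left_mono[of 1 "qpoch_inf (x * q) q" "1 - x"] by simp
qed

lemma qq_lt1: fixes q :: real assumes "0 < q" "q < 1" shows "q * q ^ k < 1"
proof -
  have "q ^ k \<le> 1" using assms by (simp add: power_le_one_iff)
  then have "q * q ^ k \<le> q" using mult_left_le[of "q ^ k" q] assms by simp
  then show ?thesis using assms by linarith
qed

lemma qpoch_01:
  assumes "0 \<le> y" "y < 1" "0 < q" "q < 1"
  shows "0 < qpoch y q n \<and> qpoch y q n \<le> 1"
proof (induction n)
  case 0 then show ?case by (simp add: qpoch_def)
next
  case (Suc n)
  have "y * q ^ n \<le> y * 1" using assms by (intro mult_left_mono) (auto simp: power_le_one)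
  then have a: "0 < 1 - y * q ^ n" "1 - y * q ^ n \<le> 1" using assms by (auto simp: mult_nonneg_nonneg)
  have "qpoch y q n * (1 - y * q ^ n) \<le> 1 * 1"
    by (rule mult_mono) (use Suc a in auto)
  then show ?case using Suc a by (simp add: qpoch_Suc)
qed

lemma qp_01:
  assumes "0 \<le> y" "y < 1" "0 < q" "q < 1"
  shows "0 < qpoch_inf y q \<and> qpoch_inf y q \<le> 1"
proof -
  have "0 \<le> qpoch_inf y q"
    by (rule LIMSEQ_le_const[OF qp_lim[OF assms(3,4)]]) (use qpoch_01[OF assms] in \<open>auto intro: less_imp_le\<close>)
  moreover have "qpoch_inf y q \<noteq> 0"
    unfolding qpoch_inf_def
  proof (rule prodinf_nonzero[OF qp_conv[OF assms(3,4)]])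
    fix i
    have "y * q ^ i \<le> y * 1" using assms by (intro mult_left_mono) (auto simp: power_le_one)
    then show "1 - y * q ^ i \<noteq> 0" using assms by auto
  qed
  moreover have "qpoch_inf y q \<le> 1"
    by (rule LIMSEQ_le_const2[OF qp_lim[OF assms(3,4)]]) (use qpoch_01[OF assms] in auto)
  ultimately show ?thesis by auto
qed

lemma qpq_pos: assumes "0 < q" "q < 1" shows "0 < qpoch_inf q q"
  using qp_01[of q q] assms by auto

lemma qpochq_pos: assumes "0 < q" "q < 1" shows "0 < qpoch q q k"
  using qpoch_01[of q q] assms by auto

lemma qpochq_ge: assumes "0 < q" "q < 1" shows "qpoch_inf q q \<le> qpoch q q k"
proof -
  have "qpoch_inf q q = qpoch q q k * qpoch_inf (q * q ^ k) q" by (rule qp_split[OF assms])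
  moreover have "0 < qpoch_inf (q * q ^ k) q \<and> qpoch_inf (q * q ^ k) q \<le> 1"
  proof (rule qp_01[OF _ _ assms])
    show "0 \<le> q * q ^ k" using assms by simp
    show "q * q ^ k < 1" by (rule qq_lt1[OF assms])
  qed
  ultimately show ?thesis
    using qpochq_pos[OF assms, of k] mult_left_mono[of "qpoch_inf (q * q ^ k) q" 1 "qpoch q q k"]
    by auto
qed

lemma chi_partial:
  assumes "0 < q" "q < 1"
  shows "(\<Sum>k<Suc N. q ^ k / qpoch q q k) = 1 / qpoch q q N"
proof (induction N)
  case 0 then show ?case by (simp add: qpoch_def)
next
  case (Suc N)
  have p: "0 < qpoch q q N" by (rule qpochq_pos[OF assms])
  have a: "0 < 1 - q * q ^ N" using qq_lt1[OF assms, of N] by simp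
  have "(\<Sum>k<Suc (Suc N). q ^ k / qpoch q q k) = 1 / qpoch q q N + q ^ Suc N / qpoch q q (Suc N)"
    using Suc by simp
  also have "\<dots> = 1 / qpoch q q (Suc N)"
    using p a by (simp add: qpoch_Suc field_simps)
  finally show ?case .
qed

lemma chi_sums:
  assumes "0 < q" "q < 1"
  shows "(\<lambda>k. q ^ k / qpoch q q k) sums (1 / qpoch_inf q q)"
proof -
  have "(\<lambda>N. 1 / qpoch q q N) \<longlonglongrightarrow> 1 / qpoch_inf q q"
    by (intro tendsto_divide tendsto_const qp_lim[OF assms]) (use qpq_pos[OF assms] in auto)
  then have "(\<lambda>N. \<Sum>k<Suc N. q ^ k / qpoch q q k) \<longlonglongrightarrow> 1 / qpoch_inf q q"
    by (simp only: chi_partial[OF assms])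
  then show ?thesis unfolding sums_def by (rule LIMSEQ_imp_Suc)
qed

definition qa :: "real \<Rightarrow> nat \<Rightarrow> real" where
  "qa q k = q powr (real k * (real k - 1) / 2) / qpoch q q k"

definition qg :: "real \<Rightarrow> real \<Rightarrow> real" where
  "qg q w = (\<Sum>k. qa q k * w ^ k)"

lemma qa_Suc:
  assumes "0 < q" "q < 1"
  shows "qa q (Suc k) * (1 - q * q ^ k) = qa q k * q ^ k"
proof -
  have e: "q powr (real (Suc k) * (real (Suc k) - 1) / 2) = q powr (real k * (real k - 1) / 2) * q ^ k"
  proof -
    have "real (Suc k) * (real (Suc k) - 1) / 2 = real k * (real k - 1) / 2 + real k"
      by (simp add: field_simps)
    then have "q powr (real (Suc k) * (real (Suc k) - 1) / 2) = q powr (real k * (real k - 1) / 2 + real k)"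
      by (simp only:)
    also have "\<dots> = q powr (real k * (real k - 1) / 2) * q powr (real k)" by (rule powr_add)
    also have "q powr (real k) = q ^ k" using assms by (simp add: powr_realpow)
    finally show ?thesis .
  qed
  have a: "0 < 1 - q * q ^ k" using qq_lt1[OF assms, of k] by simp
  show ?thesis
    using qpochq_pos[OF assms, of k] a unfolding qa_def
    by (simp only: e qpoch_Suc) (simp add: field_simps)
qed

lemma qa_summable:
  assumes "0 < q" "q < 1"
  shows "summable (\<lambda>k. qa q k * w ^ k)"
proof -
  have "(\<lambda>k. q ^ k * \<bar>w\<bar>) \<longlonglongrightarrow> 0 * \<bar>w\<bar>"
    by (intro tendsto_intros) (use assms in auto)
  then have "eventually (\<lambda>k. q ^ k * \<bar>w\<bar> < (1 - q) / 2) sequentially"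
    using assms by (intro order_tendstoD) auto
  then obtain N where N: "\<And>k. k \<ge> N \<Longrightarrow> q ^ k * \<bar>w\<bar> < (1 - q) / 2"
    by (auto simp: eventually_sequentially)
  show ?thesis
  proof (rule summable_ratio_test[of "1/2" N])
    fix k assume k: "N \<le> k"
    have "q ^ k \<le> 1" using assms by (simp add: power_le_one_iff)
    then have "q * q ^ k \<le> q" using mult_left_le[of "q ^ k" q] assms by simp
    then have a: "1 - q \<le> 1 - q * q ^ k" by simp
    have a': "0 < 1 - q * q ^ k" using qq_lt1[OF assms, of k] by simp
    have a0: "0 < 1 - q" using assms by simp
    have qa_nn: "0 \<le> qa q j" for j
      unfolding qa_def using qpochq_pos[OF assms, of j] by simp
    have e1: "qa q (Suc k) = qa q k * q ^ k / (1 - q * q ^ k)"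
      using qa_Suc[OF assms, of k] a a0 by (simp add: field_simps)
    have "norm (qa q (Suc k) * w ^ Suc k) = qa q (Suc k) * \<bar>w\<bar> ^ Suc k"
      using qa_nn[of "Suc k"] by (simp add: abs_mult power_abs)
    also have "\<dots> = qa q k * q ^ k / (1 - q * q ^ k) * \<bar>w\<bar> ^ Suc k" by (simp only: e1)
    also have "\<dots> = qa q k * \<bar>w\<bar> ^ k * (q ^ k * \<bar>w\<bar> / (1 - q * q ^ k))"
      by (simp add: mult_ac)
    also have "\<dots> \<le> qa q k * \<bar>w\<bar> ^ k * (1/2)"
    proof (rule mult_left_mono)
      have "q ^ k * \<bar>w\<bar> / (1 - q * q ^ k) \<le> q ^ k * \<bar>w\<bar> / (1 - q)"
        using a a0 a' assms by (intro divide_left_mono) (auto intro: mult_pos_pos)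
      also have "\<dots> \<le> 1/2" using N[OF k] a0 by (simp add: field_simps)
      finally show "q ^ k * \<bar>w\<bar> / (1 - q * q ^ k) \<le> 1/2" .
    qed (use qa_nn in simp)
    also have "\<dots> = 1/2 * norm (qa q k * w ^ k)"
      using qa_nn[of k] by (simp add: abs_mult power_abs)
    finally show "norm (qa q (Suc k) * w ^ Suc k) \<le> 1/2 * norm (qa q k * w ^ k)" .
  qed simp
qed

lemma qg_funeq:
  assumes "0 < q" "q < 1"
  shows "qg q w = (1 + w) * qg q (q * w)"
proof -
  have s1: "summable (\<lambda>k. qa q k * w ^ k)" and s2: "summable (\<lambda>k. qa q k * (q * w) ^ k)"
    by (rule qa_summable[OF assms])+
  have tm: "qa q (Suc k) * w ^ Suc k = qa q (Suc k) * (q * w) ^ Suc k + w * (qa q k * (q * w) ^ k)" for k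
  proof -
    have "qa q (Suc k) * w ^ Suc k - qa q (Suc k) * (q * w) ^ Suc k
        = qa q (Suc k) * (1 - q * q ^ k) * w ^ Suc k"
      by (simp add: power_mult_distrib algebra_simps)
    also have "\<dots> = w * (qa q k * (q * w) ^ k)"
      by (subst qa_Suc[OF assms]) (simp add: power_mult_distrib algebra_simps)
    finally show ?thesis by simp
  qed
  have s1': "summable (\<lambda>k. qa q (Suc k) * (q * w) ^ Suc k)"
    using s2 by (subst summable_Suc_iff)
  have "qg q w - 1 = (\<Sum>k. qa q (Suc k) * w ^ Suc k)"
    unfolding qg_def using suminf_split_head[OF s1] assms by (simp add: qa_def qpoch_def)
  also have "\<dots> = (\<Sum>k. qa q (Suc k) * (q * w) ^ Suc k + w * (qa q k * (q * w) ^ k))"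
    by (simp only: tm)
  also have "\<dots> = (\<Sum>k. qa q (Suc k) * (q * w) ^ Suc k) + w * qg q (q * w)"
  proof -
    have s3: "summable (\<lambda>k. w * (qa q k * (q * w) ^ k))" by (rule summable_mult[OF s2])
    have "(\<Sum>k. qa q (Suc k) * (q * w) ^ Suc k + w * (qa q k * (q * w) ^ k))
       = (\<Sum>k. qa q (Suc k) * (q * w) ^ Suc k) + (\<Sum>k. w * (qa q k * (q * w) ^ k))"
      by (rule suminf_add[symmetric, OF s1' s3])
    also have "(\<Sum>k. w * (qa q k * (q * w) ^ k)) = w * qg q (q * w)"
      unfolding qg_def by (rule suminf_mult[OF s2])
    finally show ?thesis .
  qed
  also have "(\<Sum>k. qa q (Suc k) * (q * w) ^ Suc k) = qg q (q * w) - 1"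
    unfolding qg_def using suminf_split_head[OF s2] assms by (simp add: qa_def qpoch_def)
  finally show ?thesis by (simp add: algebra_simps)
qed

lemma qg_iter:
  assumes "0 < q" "q < 1"
  shows "qg q w = qpoch (- w) q N * qg q (q ^ N * w)"
proof (induction N)
  case 0 then show ?case by (simp add: qpoch_def)
next
  case (Suc N)
  show ?case
    using Suc qg_funeq[OF assms, of "q ^ N * w"]
    by (simp add: qpoch_Suc algebra_simps)
qed

lemma qg_zero: assumes "0 < q" shows "qg q 0 = 1"
  unfolding qg_def powser_zero using assms by (simp add: qa_def qpoch_def)

lemma euler2:
  assumes "0 < q" "q < 1"
  shows "qg q w = qpoch_inf (- w) q"
proof -
  have c: "isCont (qg q) 0"
    unfolding qg_def[abs_def]
    by (rule isCont_powser[of _ 1]) (use qa_summable[OF assms, of 1] in auto)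
  have "(\<lambda>N. q ^ N * w) \<longlonglongrightarrow> 0 * w"
    by (intro tendsto_intros) (use assms in auto)
  then have "(\<lambda>N. qg q (q ^ N * w)) \<longlonglongrightarrow> qg q 0"
    using isCont_tendsto_compose[OF c] by simp
  then have "(\<lambda>N. qpoch (- w) q N * qg q (q ^ N * w)) \<longlonglongrightarrow> qpoch_inf (- w) q * 1"
    using qg_zero[OF assms(1)] by (intro tendsto_mult qp_lim[OF assms]) auto
  then have "(\<lambda>N. qg q w) \<longlonglongrightarrow> qpoch_inf (- w) q"
    by (simp add: qg_iter[OF assms, symmetric])
  then show ?thesis by (simp add: LIMSEQ_const_iff)
qed

lemma P_step:
  assumes "0 < q" "q < 1"
  shows "qpoch_inf x q = (1 - x) * qpoch_inf (x * q) q"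
  using qp_split[OF assms, of x 1] by (simp add: qpoch_def)

lemma P_step':
  assumes "0 < q" "q < 1"
  shows "qpoch_inf (- t * q powr e) q = (1 + t * q powr e) * qpoch_inf (- t * q powr (e + 1)) q"
proof -
  have e: "- t * q powr e * q = - t * q powr (e + 1)"
    using assms by (simp add: powr_add)
  have "qpoch_inf (- t * q powr e) q = (1 - (- t * q powr e)) * qpoch_inf (- t * q powr e * q) q"
    by (rule P_step[OF assms])
  then show ?thesis unfolding e by simp
qed

definition qh :: "real \<Rightarrow> real \<Rightarrow> int \<Rightarrow> real" where
  "qh q t m = t powr (real_of_int m) * q powr (real_of_int m ^ 2 / 2)
     * qpoch_inf (- (q powr (1/2 - real_of_int m) / t)) q
     * qpoch_inf (- t * q powr (real_of_int m + 1/2)) q"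

lemma qh_step:
  assumes "0 < q" "q < 1" "0 < t"
  shows "qh q t (m + 1) = qh q t m"
proof -
  define u where "u = q powr (real_of_int m + 1/2)"
  have u0: "0 < u" unfolding u_def using assms by simp
  have e1: "1/2 - real_of_int (m + 1) = - (real_of_int m + 1/2)" by simp
  have f1: "q powr (1/2 - real_of_int (m + 1)) = 1 / u"
    unfolding e1 u_def powr_minus by (rule inverse_eq_divide)
  have e2: "1/2 - real_of_int m = (1/2 - real_of_int (m + 1)) + 1" by simp
  have f2: "- (q powr (1/2 - real_of_int (m + 1)) / t) * q = - (q powr (1/2 - real_of_int m) / t)"
    unfolding e2 powr_add using assms by simp
  have P1: "qpoch_inf (- (q powr (1/2 - real_of_int (m + 1)) / t)) q
      = (1 + 1 / (u * t)) * qpoch_inf (- (q powr (1/2 - real_of_int m) / t)) q"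
  proof -
    have "qpoch_inf (- (q powr (1/2 - real_of_int (m + 1)) / t)) q
        = (1 - (- (q powr (1/2 - real_of_int (m + 1)) / t))) * qpoch_inf (- (q powr (1/2 - real_of_int (m + 1)) / t) * q) q"
      by (rule P_step[OF assms(1,2)])
    also have "\<dots> = (1 + 1 / (u * t)) * qpoch_inf (- (q powr (1/2 - real_of_int m) / t)) q"
      unfolding f2 unfolding f1 by simp
    finally show ?thesis .
  qed
  have e3: "real_of_int (m + 1) + 1/2 = real_of_int m + 1/2 + 1" by simp
  have P2: "qpoch_inf (- t * q powr (real_of_int m + 1/2)) q
      = (1 + t * u) * qpoch_inf (- t * q powr (real_of_int (m + 1) + 1/2)) q"
    unfolding e3 u_def by (rule P_step'[OF assms(1,2)])
  have e4: "real_of_int (m + 1) = real_of_int m + 1" by simp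
  have f4: "t powr real_of_int (m + 1) = t powr real_of_int m * t"
    unfolding e4 powr_add using assms by simp
  have e5: "real_of_int (m + 1) ^ 2 / 2 = real_of_int m ^ 2 / 2 + (real_of_int m + 1/2)"
    by (simp add: power2_eq_square field_simps)
  have f5: "q powr (real_of_int (m + 1) ^ 2 / 2) = q powr (real_of_int m ^ 2 / 2) * u"
    unfolding e5 u_def by (rule powr_add)
  define A where "A = qpoch_inf (- (q powr (1/2 - real_of_int m) / t)) q"
  define B where "B = qpoch_inf (- t * q powr (real_of_int (m + 1) + 1/2)) q"
  define T where "T = t powr real_of_int m"
  define Q where "Q = q powr (real_of_int m ^ 2 / 2)"
  have "qh q t (m + 1) = T * t * (Q * u) * ((1 + 1 / (u * t)) * A) * B"
    unfolding qh_def f4 f5 P1 A_def B_def T_def Q_def ..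
  also have "\<dots> = T * Q * A * ((1 + t * u) * B)"
    using u0 assms by (simp add: field_simps)
  also have "\<dots> = qh q t m"
    unfolding qh_def P2 A_def B_def T_def Q_def u_def ..
  finally show ?thesis .
qed

lemma qh_const:
  assumes "0 < q" "q < 1" "0 < t"
  shows "qh q t m = qh q t 0"
proof (induction m rule: int_induct[where k=0])
  case base then show ?case by simp
next
  case (step1 i) then show ?case using qh_step[OF assms, of i] by simp
next
  case (step2 i) then show ?case using qh_step[OF assms, of "i - 1"] by simp
qed

lemma qtheta_pos:
  assumes "0 < q" "q < 1" "0 < t"
  shows "1 \<le> qtheta q (- t * sqrt q)"
proof -
  have "1 \<le> qpoch_inf (- t * sqrt q) q" using assms by (intro qp_ge1) auto
  moreover have "1 \<le> qpoch_inf (q / (- t * sqrt q)) q"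
    using assms by (intro qp_ge1) (auto intro!: divide_nonneg_nonpos)
  ultimately show ?thesis unfolding qtheta_def
    using mult_mono[of 1 "qpoch_inf (- t * sqrt q) q" 1 "qpoch_inf (q / (- t * sqrt q)) q"] by simp
qed

lemma qh_zero:
  assumes "0 < q" "q < 1" "0 < t"
  shows "qh q t 0 = qtheta q (- t * sqrt q)"
proof -
  have a: "q / (- t * sqrt q) = - ((q / sqrt q) / t)" by (simp add: mult.commute)
  have b: "q / sqrt q = sqrt q" using assms by (simp add: real_div_sqrt)
  have c: "q powr (1/2) = sqrt q" using assms by (simp add: powr_half_sqrt)
  have "qh q t 0 = qpoch_inf (- (sqrt q / t)) q * qpoch_inf (- t * sqrt q) q"
    unfolding qh_def using assms by (simp add: c)
  also have "\<dots> = qtheta q (- t * sqrt q)"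
    unfolding qtheta_def a b by simp
  finally show ?thesis .
qed

definition cc :: "real \<Rightarrow> nat \<Rightarrow> real" where
  "cc q k = q ^ k / qpoch q q k * qpoch_inf q q"

definition ss :: "real \<Rightarrow> real \<Rightarrow> int \<Rightarrow> real" where
  "ss q t l = t powr (real_of_int l) * q powr (real_of_int l ^ 2 / 2)
                              / (qpoch_inf q q * qtheta q (- t * sqrt q))"

definition FF :: "real \<Rightarrow> real \<Rightarrow> int \<Rightarrow> real" where
  "FF q t n = 1 / qpoch_inf (- t * q powr (1/2 + real_of_int n)) q"

lemma conv_term:
  assumes "0 < q" "q < 1" "0 < t"
  shows "cc q k * ss q t (m - int k) =
    (t powr real_of_int m * q powr (real_of_int m ^ 2 / 2) / qtheta q (- t * sqrt q))
    * (qa q k * (q powr (3/2 - real_of_int m) / t) ^ k)"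
proof -
  have th: "0 < qtheta q (- t * sqrt q)" using qtheta_pos[OF assms] by simp
  have pq: "0 < qpoch_inf q q" by (rule qpq_pos[OF assms(1,2)])
  have pk: "0 < qpoch q q k" by (rule qpochq_pos[OF assms(1,2)])
  have e1: "t powr real_of_int (m - int k) = t powr real_of_int m / t ^ k"
    using assms by (simp add: powr_diff powr_realpow)
  have e2: "(q powr (3/2 - real_of_int m) / t) ^ k = q powr (real k * (3/2 - real_of_int m)) / t ^ k"
    using assms by (simp add: power_divide powr_power)
  have e3: "q ^ k * q powr (real_of_int (m - int k) ^ 2 / 2)
      = q powr (real_of_int m ^ 2 / 2) * (q powr (real k * (real k - 1) / 2) * q powr (real k * (3/2 - real_of_int m)))"
  proof -
    have "q ^ k * q powr (real_of_int (m - int k) ^ 2 / 2) = q powr (real k + real_of_int (m - int k) ^ 2 / 2)"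
      using assms by (simp add: powr_add powr_realpow)
    also have "real k + real_of_int (m - int k) ^ 2 / 2
        = real_of_int m ^ 2 / 2 + (real k * (real k - 1) / 2 + real k * (3/2 - real_of_int m))"
      by (simp add: power2_eq_square field_simps)
    also have "q powr \<dots> = q powr (real_of_int m ^ 2 / 2) * (q powr (real k * (real k - 1) / 2) * q powr (real k * (3/2 - real_of_int m)))"
      by (simp add: powr_add)
    finally show ?thesis .
  qed
  have "cc q k * ss q t (m - int k)
     = (q ^ k * q powr (real_of_int (m - int k) ^ 2 / 2)) * t powr real_of_int (m - int k)
       / (qpoch q q k * qtheta q (- t * sqrt q))"
    unfolding cc_def ss_def using pq by (simp add: field_simps)
  also have "\<dots> = q powr (real_of_int m ^ 2 / 2) * (q powr (real k * (real k - 1) / 2) * q powr (real k * (3/2 - real_of_int m)))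
       * (t powr real_of_int m / t ^ k) / (qpoch q q k * qtheta q (- t * sqrt q))"
    by (simp only: e3 e1)
  also have "\<dots> = (t powr real_of_int m * q powr (real_of_int m ^ 2 / 2) / qtheta q (- t * sqrt q))
    * (qa q k * (q powr (3/2 - real_of_int m) / t) ^ k)"
    unfolding e2 qa_def using th pk assms by (simp add: field_simps)
  finally show ?thesis .
qed

lemma conv_sums:
  assumes "0 < q" "q < 1" "0 < t"
  shows "(\<lambda>k. cc q k * ss q t (m - int k)) sums
    (t * q powr (real_of_int m - 1/2) / qpoch_inf (- t * q powr (real_of_int m - 1/2)) q)"
proof -
  define w where "w = q powr (3/2 - real_of_int m) / t"
  define K where "K = t powr real_of_int m * q powr (real_of_int m ^ 2 / 2) / qtheta q (- t * sqrt q)"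
  have "(\<lambda>k. qa q k * w ^ k) sums qg q w"
    unfolding qg_def by (rule summable_sums[OF qa_summable[OF assms(1,2)]])
  then have "(\<lambda>k. K * (qa q k * w ^ k)) sums (K * qpoch_inf (- w) q)"
    using euler2[OF assms(1,2)] by (simp add: sums_mult)
  moreover have "K * qpoch_inf (- w) q = t * q powr (real_of_int m - 1/2) / qpoch_inf (- t * q powr (real_of_int m - 1/2)) q"
  proof -
    have h: "qh q t (m - 1) = qtheta q (- t * sqrt q)"
      using qh_const[OF assms, of "m - 1"] qh_zero[OF assms] by simp
    have a1: "1/2 - real_of_int (m - 1) = 3/2 - real_of_int m" by simp
    have a2: "real_of_int (m - 1) + 1/2 = real_of_int m - 1/2" by simp
    have h': "t powr real_of_int (m - 1) * q powr (real_of_int (m - 1) ^ 2 / 2)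
       * qpoch_inf (- w) q * qpoch_inf (- t * q powr (real_of_int m - 1/2)) q = qtheta q (- t * sqrt q)"
      using h[unfolded qh_def a1 a2] unfolding w_def by simp
    have e4: "real_of_int m = real_of_int (m - 1) + 1" by simp
    have f4: "t powr real_of_int m = t powr real_of_int (m - 1) * t"
      unfolding e4 powr_add using assms by simp
    have f5: "q powr (real_of_int m ^ 2 / 2) = q powr (real_of_int (m - 1) ^ 2 / 2) * q powr (real_of_int m - 1/2)"
    proof -
      have ee: "real_of_int m ^ 2 / 2 = real_of_int (m - 1) ^ 2 / 2 + (real_of_int m - 1/2)"
        by (simp add: power2_eq_square field_simps)
      show ?thesis unfolding ee by (rule powr_add)
    qed
    have p1: "1 \<le> qpoch_inf (- t * q powr (real_of_int m - 1/2)) q"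
      using assms by (intro qp_ge1) auto
    have p2: "0 < t powr real_of_int (m - 1) * q powr (real_of_int (m - 1) ^ 2 / 2)"
      using assms by simp
    have p3: "1 \<le> qpoch_inf (- w) q"
      unfolding w_def using assms by (intro qp_ge1) auto
    show ?thesis
      unfolding K_def f4 f5 h'[symmetric] using p1 p2 p3 assms
      by (simp add: field_simps)
  qed
  moreover have "(\<lambda>k. cc q k * ss q t (m - int k)) = (\<lambda>k. K * (qa q k * w ^ k))"
    unfolding K_def w_def by (rule ext, rule conv_term[OF assms])
  ultimately show ?thesis by simp
qed

lemma tele: "0 < (X::real) \<Longrightarrow> 0 < a \<Longrightarrow> 1/X - 1/((1+a)*X) = a/((1+a)*X)"
proof -
  assume a: "0 < X" "0 < a"
  then have e: "1/X = (1+a)/((1+a)*X)" by simp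
  have "1/X - 1/((1+a)*X) = (1+a)/((1+a)*X) - 1/((1+a)*X)" by (subst e) (rule refl)
  also have "\<dots> = ((1+a) - 1)/((1+a)*X)" by (rule diff_divide_distrib[symmetric])
  also have "\<dots> = a/((1+a)*X)" by simp
  finally show ?thesis .
qed

lemma FF_diff:
  assumes "0 < q" "q < 1" "0 < t"
  shows "FF q t m - FF q t (m - 1) = t * q powr (real_of_int m - 1/2) / qpoch_inf (- t * q powr (real_of_int m - 1/2)) q"
proof -
  have a1: "1/2 + real_of_int (m - 1) = real_of_int m - 1/2" by simp
  have a2: "1/2 + real_of_int m = real_of_int m - 1/2 + 1" by simp
  have st: "qpoch_inf (- t * q powr (real_of_int m - 1/2)) q
     = (1 + t * q powr (real_of_int m - 1/2)) * qpoch_inf (- t * q powr (1/2 + real_of_int m)) q"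
    unfolding a2 by (rule P_step'[OF assms(1,2)])
  have p: "1 \<le> qpoch_inf (- t * q powr (1/2 + real_of_int m)) q"
    using assms by (intro qp_ge1) auto
  have x: "0 < t * q powr (real_of_int m - 1/2)" using assms by simp
  show ?thesis
    unfolding FF_def a1 st by (rule tele) (use p x in auto)
qed

definition pp :: "real \<Rightarrow> real \<Rightarrow> int \<Rightarrow> real" where
  "pp q t m = t * q powr (real_of_int m - 1/2) / qpoch_inf (- t * q powr (real_of_int m - 1/2)) q"

lemma pp_nonneg:
  assumes "0 < q" "q < 1" "0 < t"
  shows "0 \<le> pp q t m"
proof -
  have "1 \<le> qpoch_inf (- t * q powr (real_of_int m - 1/2)) q"
    using assms by (intro qp_ge1) auto
  then show ?thesis unfolding pp_def using assms by simp
qed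

lemma FF_nonneg:
  assumes "0 < q" "q < 1" "0 < t"
  shows "0 \<le> FF q t n"
proof -
  have "1 \<le> qpoch_inf (- t * q powr (1/2 + real_of_int n)) q"
    using assms by (intro qp_ge1) auto
  then show ?thesis unfolding FF_def by simp
qed

lemma FF_tail:
  assumes "0 < q" "q < 1" "0 < t"
  shows "(\<lambda>N. FF q t (n - int N)) \<longlonglongrightarrow> 0"
proof (rule tendsto_sandwich[of "\<lambda>_. 0" _ _ "\<lambda>N. q ^ N / (t * q powr (1/2 + real_of_int n))"])
  define C where "C = q powr (1/2 + real_of_int n)"
  have C0: "0 < C" unfolding C_def using assms by simp
  show "eventually (\<lambda>N. 0 \<le> FF q t (n - int N)) sequentially"
    using FF_nonneg[OF assms] by simp
  show "eventually (\<lambda>N. FF q t (n - int N) \<le> q ^ N / (t * q powr (1/2 + real_of_int n))) sequentially"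
  proof (rule always_eventually, rule allI)
    fix N :: nat
    have ee: "1/2 + real_of_int (n - int N) = (1/2 + real_of_int n) - real N" by simp
    have xe: "q powr (1/2 + real_of_int (n - int N)) = C / q ^ N"
      unfolding ee C_def powr_diff using assms by (simp add: powr_realpow)
    define x where "x = t * (C / q ^ N)"
    have x0: "0 < x" unfolding x_def using assms C0 by simp
    have "1 - (- t * q powr (1/2 + real_of_int (n - int N))) \<le> qpoch_inf (- t * q powr (1/2 + real_of_int (n - int N))) q"
      using assms by (intro qp_ge) auto
    then have px: "x \<le> qpoch_inf (- t * q powr (1/2 + real_of_int (n - int N))) q"
      unfolding xe x_def by simp
    have "FF q t (n - int N) \<le> 1 / x"
      unfolding FF_def using px x0 by (intro divide_left_mono) auto
    also have "1 / x = q ^ N / (t * C)" unfolding x_def using assms C0 by (simp add: field_simps)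
    finally show "FF q t (n - int N) \<le> q ^ N / (t * q powr (1/2 + real_of_int n))"
      unfolding C_def .
  qed
  show "(\<lambda>N. q ^ N / (t * q powr (1/2 + real_of_int n))) \<longlonglongrightarrow> 0"
    using assms by (intro tendsto_divide_zero LIMSEQ_power_zero) auto
qed simp

lemma FF_top:
  assumes "0 < q" "q < 1" "0 < t"
  shows "(\<lambda>N. FF q t (int N)) \<longlonglongrightarrow> 1"
proof -
  define x where "x = (\<lambda>N::nat. t * q powr (1/2 + real_of_int (int N)))"
  have xe: "x N = t * q powr (1/2) * q ^ N" for N
    unfolding x_def using assms by (simp add: powr_add powr_realpow)
  have x0: "x \<longlonglongrightarrow> 0"
  proof -
    have "(\<lambda>N. t * q powr (1/2) * q ^ N) \<longlonglongrightarrow> t * q powr (1/2) * 0"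
      using assms by (intro tendsto_intros) auto
    then show ?thesis by (simp add: xe[abs_def])
  qed
  have "(\<lambda>N. qpoch_inf (- t * q powr (1/2 + real_of_int (int N))) q) \<longlonglongrightarrow> 1"
  proof (rule tendsto_sandwich[of "\<lambda>_. 1" _ _ "\<lambda>N. exp (x N / (1 - q))"])
    show "eventually (\<lambda>N. 1 \<le> qpoch_inf (- t * q powr (1/2 + real_of_int (int N))) q) sequentially"
      using assms by (intro always_eventually allI qp_ge1) auto
    show "eventually (\<lambda>N. qpoch_inf (- t * q powr (1/2 + real_of_int (int N))) q \<le> exp (x N / (1 - q))) sequentially"
    proof (intro always_eventually allI)
      fix N
      have "qpoch_inf (- t * q powr (1/2 + real_of_int (int N))) q \<le> exp (- (- t * q powr (1/2 + real_of_int (int N))) / (1 - q))"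
        using assms by (intro qp_le_exp) auto
      then show "qpoch_inf (- t * q powr (1/2 + real_of_int (int N))) q \<le> exp (x N / (1 - q))"
        unfolding x_def by simp
    qed
    have "(\<lambda>N. exp (x N / (1 - q))) \<longlonglongrightarrow> exp (0 / (1 - q))"
      by (intro tendsto_intros x0) (use assms in auto)
    then show "(\<lambda>N. exp (x N / (1 - q))) \<longlonglongrightarrow> 1" by simp
  qed simp
  then have "(\<lambda>N. 1 / qpoch_inf (- t * q powr (1/2 + real_of_int (int N))) q) \<longlonglongrightarrow> 1 / 1"
    by (intro tendsto_divide tendsto_const) auto
  then show ?thesis unfolding FF_def by simp
qed

lemma FF_diff':
  assumes "0 < q" "q < 1" "0 < t"
  shows "FF q t m - FF q t (m - 1) = pp q t m"
  unfolding pp_def by (rule FF_diff[OF assms])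

lemma FF_partial:
  assumes "0 < q" "q < 1" "0 < t"
  shows "(\<Sum>j<N. pp q t (n - int j)) = FF q t n - FF q t (n - int N)"
proof (induction N)
  case 0 then show ?case by simp
next
  case (Suc N)
  have e: "n - int (Suc N) = n - int N - 1" by simp
  have "pp q t (n - int N) = FF q t (n - int N) - FF q t (n - int (Suc N))"
    unfolding e by (rule FF_diff'[OF assms, symmetric])
  then show ?case unfolding sum.lessThan_Suc Suc.IH by linarith
qed

lemma FF_sums:
  assumes "0 < q" "q < 1" "0 < t"
  shows "(\<lambda>j. pp q t (n - int j)) sums FF q t n"
proof -
  have "(\<lambda>N. FF q t n - FF q t (n - int N)) \<longlonglongrightarrow> FF q t n - 0"
    by (intro tendsto_intros FF_tail[OF assms])
  then show ?thesis unfolding sums_def FF_partial[OF assms] by simp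
qed

lemma cc_nonneg: assumes "0 < q" "q < 1" shows "0 \<le> cc q k"
  unfolding cc_def using qpochq_pos[OF assms, of k] qpq_pos[OF assms] assms
  by (intro mult_nonneg_nonneg divide_nonneg_nonneg zero_le_power) auto

lemma ss_nonneg: assumes "0 < q" "q < 1" "0 < t" shows "0 \<le> ss q t l"
  unfolding ss_def using qtheta_pos[OF assms] qpq_pos[OF assms(1,2)] assms
  by (intro mult_nonneg_nonneg divide_nonneg_nonneg) auto

lemma cc_sums: assumes "0 < q" "q < 1" shows "cc q sums 1"
proof -
  have "(\<lambda>k. q ^ k / qpoch q q k * qpoch_inf q q) sums (1 / qpoch_inf q q * qpoch_inf q q)"
    by (rule sums_mult2[OF chi_sums[OF assms]])
  then show ?thesis using qpq_pos[OF assms] unfolding cc_def[abs_def] by simp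
qed

lemma cc_total: assumes "0 < q" "q < 1"
  shows "(\<integral>\<^sup>+k. ennreal (cc q k) \<partial>count_space UNIV) = 1"
proof -
  have "(\<Sum>k. ennreal (cc q k)) = ennreal (\<Sum>k. cc q k)"
    by (rule suminf_ennreal2) (use cc_nonneg[OF assms] sums_summable[OF cc_sums[OF assms]] in auto)
  also have "(\<Sum>k. cc q k) = 1" by (rule sums_unique[OF cc_sums[OF assms], symmetric])
  finally show ?thesis unfolding nn_integral_count_space_nat by simp
qed

lemma int_sum:
  assumes "0 < q" "q < 1" "0 < t"
  shows "(\<integral>\<^sup>+m. ennreal (pp q t m) * indicator {..n} m \<partial>count_space UNIV) = ennreal (FF q t n)"
proof -
  have b: "bij_betw (\<lambda>j::nat. n - int j) UNIV {..n}"
    by (rule bij_betwI[where g="\<lambda>m. nat (n - m)"]) auto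
  have "(\<integral>\<^sup>+m. ennreal (pp q t m) * indicator {..n} m \<partial>count_space UNIV)
      = (\<integral>\<^sup>+m. ennreal (pp q t m) \<partial>count_space {..n})"
    by (rule nn_integral_count_space_indicator[symmetric]) simp
  also have "\<dots> = (\<integral>\<^sup>+j. ennreal (pp q t (n - int j)) \<partial>count_space UNIV)"
    by (rule nn_integral_bij_count_space[OF b, symmetric])
  also have "\<dots> = (\<Sum>j. ennreal (pp q t (n - int j)))"
    by (rule nn_integral_count_space_nat)
  also have "\<dots> = ennreal (\<Sum>j. pp q t (n - int j))"
    by (rule suminf_ennreal2) (use pp_nonneg[OF assms] sums_summable[OF FF_sums[OF assms]] in auto)
  also have "(\<Sum>j. pp q t (n - int j)) = FF q t n"
    by (rule sums_unique[OF FF_sums[OF assms], symmetric])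
  finally show ?thesis .
qed

lemma conv_inner:
  assumes "0 < q" "q < 1" "0 < t"
  shows "(\<integral>\<^sup>+k. ennreal (cc q k * ss q t (m - int k)) \<partial>count_space UNIV) = ennreal (pp q t m)"
proof -
  have s: "(\<lambda>k. cc q k * ss q t (m - int k)) sums pp q t m"
    unfolding pp_def by (rule conv_sums[OF assms])
  have "(\<Sum>k. ennreal (cc q k * ss q t (m - int k))) = ennreal (\<Sum>k. cc q k * ss q t (m - int k))"
    by (rule suminf_ennreal2) (use cc_nonneg[OF assms(1,2)] ss_nonneg[OF assms] sums_summable[OF s] in auto)
  also have "(\<Sum>k. cc q k * ss q t (m - int k)) = pp q t m" by (rule sums_unique[OF s, symmetric])
  finally show ?thesis unfolding nn_integral_count_space_nat .
qed

lemma main_A: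
  assumes "0 < q" "q < 1" "0 < t"
  shows "(\<integral>\<^sup>+k. ennreal (cc q k) * (\<integral>\<^sup>+l. ennreal (ss q t l) * indicator {..n} (int k + l) \<partial>count_space UNIV) \<partial>count_space UNIV)
     = ennreal (FF q t n)"
proof -
  have inner: "(\<integral>\<^sup>+l. ennreal (ss q t l) * indicator {..n} (int k + l) \<partial>count_space UNIV)
      = (\<integral>\<^sup>+m. ennreal (ss q t (m - int k)) * indicator {..n} m \<partial>count_space UNIV)" for k :: nat
  proof -
    have b: "bij_betw (\<lambda>m. m - int k) UNIV UNIV"
      by (rule bij_betwI[where g="\<lambda>l. l + int k"]) auto
    show ?thesis
      using nn_integral_bij_count_space[OF b, of "\<lambda>l. ennreal (ss q t l) * indicator {..n} (int k + l)"]
      by simp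
  qed
  have "(\<integral>\<^sup>+k. ennreal (cc q k) * (\<integral>\<^sup>+l. ennreal (ss q t l) * indicator {..n} (int k + l) \<partial>count_space UNIV) \<partial>count_space UNIV)
     = (\<integral>\<^sup>+k. (\<integral>\<^sup>+m. ennreal (cc q k) * (ennreal (ss q t (m - int k)) * indicator {..n} m) \<partial>count_space UNIV) \<partial>count_space UNIV)"
    unfolding inner by (subst nn_integral_cmult) auto
  also have "\<dots> = (\<integral>\<^sup>+m. (\<integral>\<^sup>+k. ennreal (cc q k) * (ennreal (ss q t (m - int k)) * indicator {..n} m) \<partial>count_space UNIV) \<partial>count_space UNIV)"
    by (rule nn_integral_count_space_nn_integral[symmetric]) auto
  also have "\<dots> = (\<integral>\<^sup>+m. ennreal (pp q t m) * indicator {..n} m \<partial>count_space UNIV)"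
  proof (rule nn_integral_cong)
    fix m :: int
    have "(\<integral>\<^sup>+k. ennreal (cc q k) * (ennreal (ss q t (m - int k)) * indicator {..n} m) \<partial>count_space UNIV)
        = (\<integral>\<^sup>+k. ennreal (cc q k * ss q t (m - int k)) * indicator {..n} m \<partial>count_space UNIV)"
      using cc_nonneg[OF assms(1,2)] ss_nonneg[OF assms]
      by (intro nn_integral_cong) (simp add: ennreal_mult mult.assoc)
    also have "\<dots> = (\<integral>\<^sup>+k. ennreal (cc q k * ss q t (m - int k)) \<partial>count_space UNIV) * indicator {..n} m"
      by (rule nn_integral_multc) auto
    also have "\<dots> = ennreal (pp q t m) * indicator {..n} m"
      by (simp only: conv_inner[OF assms])
    finally show "(\<integral>\<^sup>+k. ennreal (cc q k) * (ennreal (ss q t (m - int k)) * indicator {..n} m) \<partial>count_space UNIV)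
        = ennreal (pp q t m) * indicator {..n} m" .
  qed
  also have "\<dots> = ennreal (FF q t n)" by (rule int_sum[OF assms])
  finally show ?thesis .
qed

lemma FF_incseq:
  assumes "0 < q" "q < 1" "0 < t"
  shows "incseq (\<lambda>N. ennreal (FF q t (int N)))"
proof (rule incseq_SucI)
  fix N
  have "FF q t (int (Suc N)) - FF q t (int (Suc N) - 1) = pp q t (int (Suc N))"
    by (rule FF_diff'[OF assms])
  moreover have "int (Suc N) - 1 = int N" by simp
  ultimately have "FF q t (int N) \<le> FF q t (int (Suc N))"
    using pp_nonneg[OF assms, of "int (Suc N)"] by simp
  then show "ennreal (FF q t (int N)) \<le> ennreal (FF q t (int (Suc N)))"
    by (rule ennreal_leI)
qed

lemma FF_SUP:
  assumes "0 < q" "q < 1" "0 < t"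
  shows "(SUP N. ennreal (FF q t (int N))) = 1"
proof -
  have "(\<lambda>N. ennreal (FF q t (int N))) \<longlonglongrightarrow> (SUP N. ennreal (FF q t (int N)))"
    by (rule LIMSEQ_SUP[OF FF_incseq[OF assms]])
  moreover have "(\<lambda>N. ennreal (FF q t (int N))) \<longlonglongrightarrow> ennreal 1"
    by (rule tendsto_ennrealI[OF FF_top[OF assms]])
  ultimately show ?thesis using LIMSEQ_unique by fastforce
qed

lemma ss_total:
  assumes "0 < q" "q < 1" "0 < t"
  shows "(\<integral>\<^sup>+l. ennreal (ss q t l) \<partial>count_space UNIV) = 1"
proof -
  define I where "I = (\<lambda>N (k::nat). (\<integral>\<^sup>+l. ennreal (ss q t l) * indicator {..int N} (int k + l) \<partial>count_space UNIV))"
  have pw: "(SUP N. ennreal (ss q t l) * indicator {..int N} (int k + l)) = ennreal (ss q t l)" for k l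
  proof (rule antisym)
    show "(SUP N. ennreal (ss q t l) * indicator {..int N} (int k + l)) \<le> ennreal (ss q t l)"
      by (rule SUP_least) (simp split: split_indicator)
    show "ennreal (ss q t l) \<le> (SUP N. ennreal (ss q t l) * indicator {..int N} (int k + l))"
      by (rule SUP_upper2[of "nat (int k + l)"]) (auto split: split_indicator)
  qed
  have inner: "(\<integral>\<^sup>+l. ennreal (ss q t l) \<partial>count_space UNIV) = (SUP N. I N k)" for k
  proof -
    have "(\<integral>\<^sup>+l. ennreal (ss q t l) \<partial>count_space UNIV)
        = (\<integral>\<^sup>+l. (SUP N. ennreal (ss q t l) * indicator {..int N} (int k + l)) \<partial>count_space UNIV)"
      by (simp only: pw)
    also have "\<dots> = (SUP N. I N k)"
      unfolding I_def
      by (rule nn_integral_monotone_convergence_SUP)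
         (auto simp: incseq_def le_fun_def split: split_indicator)
    finally show ?thesis .
  qed
  have incI: "incseq (\<lambda>N k. ennreal (cc q k) * I N k)"
    unfolding I_def
    by (auto simp: incseq_def le_fun_def intro!: mult_left_mono nn_integral_mono split: split_indicator)
  have "(\<integral>\<^sup>+k. ennreal (cc q k) * (\<integral>\<^sup>+l. ennreal (ss q t l) \<partial>count_space UNIV) \<partial>count_space UNIV)
      = (\<integral>\<^sup>+k. (SUP N. ennreal (cc q k) * I N k) \<partial>count_space UNIV)"
  proof (rule nn_integral_cong)
    fix k :: nat
    have "ennreal (cc q k) * (\<integral>\<^sup>+l. ennreal (ss q t l) \<partial>count_space UNIV) = ennreal (cc q k) * (SUP N. I N k)"
      by (simp only: inner[of k])
    also have "\<dots> = (SUP N. ennreal (cc q k) * I N k)" by (rule SUP_mult_left_ennreal)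
    finally show "ennreal (cc q k) * (\<integral>\<^sup>+l. ennreal (ss q t l) \<partial>count_space UNIV) = (SUP N. ennreal (cc q k) * I N k)" .
  qed
  also have "\<dots> = (SUP N. (\<integral>\<^sup>+k. ennreal (cc q k) * I N k \<partial>count_space UNIV))"
    by (rule nn_integral_monotone_convergence_SUP[OF incI]) auto
  also have "\<dots> = (SUP N. ennreal (FF q t (int N)))"
    unfolding I_def by (simp only: main_A[OF assms])
  also have "\<dots> = 1" by (rule FF_SUP[OF assms])
  finally have tot: "(\<integral>\<^sup>+k. ennreal (cc q k) * (\<integral>\<^sup>+l. ennreal (ss q t l) \<partial>count_space UNIV) \<partial>count_space UNIV) = 1" .
  have "(\<integral>\<^sup>+k. ennreal (cc q k) * (\<integral>\<^sup>+l. ennreal (ss q t l) \<partial>count_space UNIV) \<partial>count_space UNIV)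
      = (\<integral>\<^sup>+k. ennreal (cc q k) \<partial>count_space UNIV) * (\<integral>\<^sup>+l. ennreal (ss q t l) \<partial>count_space UNIV)"
    by (rule nn_integral_multc) auto
  also have "\<dots> = (\<integral>\<^sup>+l. ennreal (ss q t l) \<partial>count_space UNIV)"
    by (simp add: cc_total[OF assms(1,2)])
  finally show ?thesis using tot by simp
qed

theorem lemma2p4:
  fixes n :: int and q t :: real
  assumes "0 < q" "q < 1" "0 < t"
  shows "measure_pmf.prob (chiS_pmf q t) {..n} = 1 / qpoch_inf (- t * q powr (1/2 + real_of_int n)) q"
proof -
  have chi: "chi_pmf q = embed_pmf (cc q)" by (simp add: chi_pmf_def cc_def[abs_def])
  have S: "S_pmf q t = embed_pmf (ss q t)" by (simp add: S_pmf_def ss_def[abs_def])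
  have pchi: "pmf (chi_pmf q) k = cc q k" for k
    unfolding chi by (rule pmf_embed_pmf) (use cc_nonneg[OF assms(1,2)] cc_total[OF assms(1,2)] in auto)
  have pS: "pmf (S_pmf q t) l = ss q t l" for l
    unfolding S by (rule pmf_embed_pmf) (use ss_nonneg[OF assms] ss_total[OF assms] in auto)
  have "emeasure (measure_pmf (chiS_pmf q t)) {..n}
      = emeasure (measure_pmf (pair_pmf (chi_pmf q) (S_pmf q t))) ((\<lambda>(m, l). int m + l) -` {..n})"
    unfolding chiS_pmf_def by simp
  also have "\<dots> = (\<integral>\<^sup>+x. indicator ((\<lambda>(m, l). int m + l) -` {..n}) x \<partial>measure_pmf (pair_pmf (chi_pmf q) (S_pmf q t)))"
    by (rule nn_integral_indicator[symmetric]) simp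
  also have "\<dots> = (\<integral>\<^sup>+k. \<integral>\<^sup>+l. indicator {..n} (int k + l) \<partial>measure_pmf (S_pmf q t) \<partial>measure_pmf (chi_pmf q))"
    unfolding nn_integral_pair_pmf' by (simp add: indicator_def)
  also have "\<dots> = (\<integral>\<^sup>+k. ennreal (cc q k) * (\<integral>\<^sup>+l. ennreal (ss q t l) * indicator {..n} (int k + l) \<partial>count_space UNIV) \<partial>count_space UNIV)"
    unfolding nn_integral_measure_pmf pchi pS ..
  also have "\<dots> = ennreal (FF q t n)" by (rule main_A[OF assms])
  finally have "ennreal (measure_pmf.prob (chiS_pmf q t) {..n}) = ennreal (FF q t n)"
    by (simp add: measure_pmf.emeasure_eq_measure)
  then have "measure_pmf.prob (chiS_pmf q t) {..n} = FF q t n"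
    using FF_nonneg[OF assms] by (simp add: ennreal_inj)
  then show ?thesis unfolding FF_def .
qed

end
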